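(* Let $s\in(0,1/2)$, $a:=1-2s$, let $\mathcal{N}\subset\mathbb{R}^d$ be a compact smooth submanifold without boundary, and let $v\in H^1(\partial^+B_1;\mathbb{R}^d,y^ad\mathbf{x})$ be such that $v(\pm1,0)\in\mathcal{N}$. Then for every $\mathbf{x}\in\partial^+B_1$, $$d_{\mathcal{N}}^2\big(v(\mathbf{x})\big)\le\left(\int_{\partial^+B_1}y^a|\partial_\tau v|^2d\mathcal{H}^1\right)^{1/2}\left(\int_{\partial^+B_1}y^{-a}d_{\mathcal{N}}^2(v)\,d\mathcal{H}^1\right)^{1/2}.$$
   Context: $\partial^+B_1:=\{(x,y):x^2+y^2=1,\ y>0\}$ is the open upper unit half-circle, $\partial_\tau$ denotes the tangential derivative along it, and $H^1(\partial^+B_1;\mathbb{R}^d,y^ad\mathbf{x})$ is the space of maps $v$ on $\partial^+B_1$ with $\int_{\partial^+B_1}y^a(|v|^2+|\partial_\tau v|^2)d\mathcal{H}^1<\infty$; such maps are continuous up to the endpoints $(\pm1,0)$. $d_{\mathcal{N}}(z):=\inf_{p\in\mathcal{N}}|z-p|$ is the distance to $\mathcal{N}$. *)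

theory Defs
  imports "HOL-Analysis.Analysis"
begin

text \<open>f is C-infinity on the open set U: there is a family F of functions indexed by lists of
 directions with F [] = f on U, every F vs continuous on U, and F (w # vs) is the directional
 derivative of F vs in direction w at every point of U.  (Continuous directional derivatives of
 all orders is the usual C-infinity condition.)\<close>
definition smooth_on :: "'a::euclidean_space set \<Rightarrow> ('a \<Rightarrow> 'b::euclidean_space) \<Rightarrow> bool" where
  "smooth_on U f \<longleftrightarrow> open U \<and>
     (\<exists>F :: 'a list \<Rightarrow> 'a \<Rightarrow> 'b.
        (\<forall>x\<in>U. F [] x = f x) \<and>
        (\<forall>vs. continuous_on U (F vs)) \<and>
        (\<forall>vs w. \<forall>x\<in>U. ((\<lambda>t. F vs (x + t *\<^sub>R w)) has_vector_derivative F (w # vs) x) (at 0)))"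

definition smooth_submanifold :: "'a::euclidean_space set \<Rightarrow> bool" where
  "smooth_submanifold N \<longleftrightarrow>
     (\<forall>p\<in>N. \<exists>U V (\<phi>::'a \<Rightarrow> 'a) \<psi> L.
        open U \<and> p \<in> U \<and> open V \<and> subspace L \<and>
        smooth_on U \<phi> \<and> smooth_on V \<psi> \<and>
        (\<forall>x\<in>U. \<phi> x \<in> V \<and> \<psi> (\<phi> x) = x) \<and>
        (\<forall>z\<in>V. \<psi> z \<in> U \<and> \<phi> (\<psi> z) = z) \<and>
        \<phi> ` (U \<inter> N) = V \<inter> L)"

definition upper_half_circle :: "(real \<times> real) set" where
  "upper_half_circle = {(x, y). x\<^sup>2 + y\<^sup>2 = 1 \<and> y > 0}"

text \<open>Arc-length parametrisation of the upper half-circle by the angle in (0, pi);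
 H^1 measure on the arc corresponds to Lebesgue measure in the angle and the weight y is sin.\<close>
definition hc :: "real \<Rightarrow> real \<times> real" where
  "hc \<theta> = (cos \<theta>, sin \<theta>)"

text \<open>g is a (weak) tangential derivative of v along the half-circle: v(hc) is locally
 absolutely continuous on (0, pi) with derivative g.\<close>
definition tangential_weak_deriv :: "(real \<times> real \<Rightarrow> 'a::euclidean_space) \<Rightarrow> (real \<Rightarrow> 'a) \<Rightarrow> bool" where
  "tangential_weak_deriv v g \<longleftrightarrow>
     (\<forall>s t. 0 < s \<longrightarrow> s \<le> t \<longrightarrow> t < pi \<longrightarrow>
        set_integrable lborel {s..t} g \<and>
        v (hc t) - v (hc s) = (LINT \<theta>:{s..t}|lborel. g \<theta>))"

definition weighted_H1 :: "real \<Rightarrow> (real \<times> real \<Rightarrow> 'a::euclidean_space) \<Rightarrow> (real \<Rightarrow> 'a) \<Rightarrow> bool" where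
  "weighted_H1 a v g \<longleftrightarrow> tangential_weak_deriv v g \<and>
     set_integrable lborel {0<..<pi} (\<lambda>\<theta>. sin \<theta> powr a * (norm (v (hc \<theta>)))\<^sup>2) \<and>
     set_integrable lborel {0<..<pi} (\<lambda>\<theta>. sin \<theta> powr a * (norm (g \<theta>))\<^sup>2)"

end

theory Submission
  imports Defs
begin

lemma cm: "f integrable_on S \<Longrightarrow> (\<lambda>x. (c::real) * f x) integrable_on S"
  using integrable_on_cmult_left[of f S c] by simp

lemma key_local:
  fixes w :: "real \<Rightarrow> 'a::euclidean_space" and h F :: "real \<Rightarrow> real" and g :: "real \<Rightarrow> 'a"
  assumes st: "s \<le> t"
   and wd: "\<And>a b. s \<le> a \<Longrightarrow> a \<le> b \<Longrightarrow> b \<le> t \<Longrightarrow> norm (w b - w a) \<le> integral {a..b} (\<lambda>\<theta>. norm (g \<theta>))"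
   and gi: "(\<lambda>\<theta>. norm (g \<theta>)) integrable_on {s..t}"
   and Fi: "F integrable_on {s..t}"
   and hc: "\<And>x. x \<in> {s..t} \<Longrightarrow> isCont h x"
   and hlip: "\<And>a b. \<bar>h b - h a\<bar> \<le> norm (w b - w a)"
   and h0: "\<And>x. h x \<ge> 0"
   and dpos: "\<delta> > 0"
   and Fb: "\<And>\<theta>. \<theta> \<in> {s..t} \<Longrightarrow> (2*h \<theta> + 2*\<delta>) * norm (g \<theta>) \<le> F \<theta>"
  shows "\<bar>h t ^ 2 - h s ^ 2\<bar> \<le> integral {s..t} F"
proof -
  define P where "P a b \<longleftrightarrow> (s \<le> a \<longrightarrow> b \<le> t \<longrightarrow> \<bar>h b ^ 2 - h a ^ 2\<bar> \<le> integral {a..b} F)" for a b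
  have "P s t"
    using st
  proof (induct rule: Bolzano)
    case (trans a b c)
    show ?case unfolding P_def
    proof (intro impI)
      assume "s \<le> a" "c \<le> t"
      then have 1: "\<bar>h b ^ 2 - h a ^ 2\<bar> \<le> integral {a..b} F" "\<bar>h c ^ 2 - h b ^ 2\<bar> \<le> integral {b..c} F"
        using trans P_def by auto
      have Fac: "F integrable_on {a..c}"
        using \<open>s \<le> a\<close> \<open>c \<le> t\<close> by (intro integrable_on_subinterval[OF Fi]) auto
      have abc: "a \<le> b" "b \<le> c" using trans by auto
      have "integral {a..b} F + integral {b..c} F = integral {a..c} F"
        by (rule Henstock_Kurzweil_Integration.integral_combine[OF abc Fac])
      then show "\<bar>h c ^ 2 - h a ^ 2\<bar> \<le> integral {a..c} F" using 1 by linarith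
    qed
  next
    case (local x)
    have "isCont h x" using hc local by auto
    then have L: "\<forall>r>0. \<exists>d>0. \<forall>y. y \<noteq> x \<and> norm (y - x) < d \<longrightarrow> norm (h y - h x) < r"
      unfolding isCont_def LIM_eq .
    have "\<delta>/2 > 0" using dpos by simp
    then have "\<exists>d>0. \<forall>y. y \<noteq> x \<and> norm (y - x) < d \<longrightarrow> norm (h y - h x) < \<delta>/2"
      using L by blast
    then obtain d where d0: "d > 0" and d1: "\<forall>y. y \<noteq> x \<and> norm (y - x) < d \<longrightarrow> norm (h y - h x) < \<delta>/2"
      by blast
    have d2: "\<bar>h y - h x\<bar> < \<delta>/2" if "\<bar>y - x\<bar> < d" for y
    proof (cases "y = x")
      case True then show ?thesis using dpos by simp
    next
      case False then show ?thesis using d1 that by auto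
    qed
    note d = d0 d2
    have "\<forall>a b. a \<le> x \<and> x \<le> b \<and> b - a < d \<longrightarrow> P a b"
    proof (intro allI impI, unfold P_def, intro impI)
      fix a b assume ab: "a \<le> x \<and> x \<le> b \<and> b - a < d" and sa: "s \<le> a" and bt: "b \<le> t"
      have Fab: "F integrable_on {a..b}" using sa bt by (intro integrable_on_subinterval[OF Fi]) auto
      have gab: "(\<lambda>\<theta>. norm (g \<theta>)) integrable_on {a..b}" using sa bt by (intro integrable_on_subinterval[OF gi]) auto
      have ha: "\<bar>h a - h x\<bar> < \<delta>/2" using d ab by auto
      have hb: "\<bar>h b - h x\<bar> < \<delta>/2" using d ab by auto
      have sq: "h b ^ 2 - h a ^ 2 = (h b - h a) * (h a + h b)" by (simp add: power2_eq_square algebra_simps)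
      have "\<bar>h b ^ 2 - h a ^ 2\<bar> = \<bar>h b - h a\<bar> * (h a + h b)"
        unfolding sq abs_mult using h0[of a] h0[of b] by simp
      also have "\<dots> \<le> integral {a..b} (\<lambda>\<theta>. norm (g \<theta>)) * (h a + h b)"
        using hlip[of b a] wd[of a b] sa bt ab h0[of a] h0[of b]
        by (intro mult_right_mono) auto
      also have "\<dots> = integral {a..b} (\<lambda>\<theta>. (h a + h b) * norm (g \<theta>))"
        using integral_mult[OF gab, of "h a + h b"] by (simp add: mult.commute)
      also have "\<dots> \<le> integral {a..b} F"
      proof (rule integral_le)
        show "(\<lambda>\<theta>. (h a + h b) * norm (g \<theta>)) integrable_on {a..b}"
          by (rule cm[OF gab])
        show "F integrable_on {a..b}" by (rule Fab)
        fix \<theta> assume th: "\<theta> \<in> {a..b}"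
        have "\<bar>h \<theta> - h x\<bar> < \<delta>/2" using d ab th by auto
        then have "h a + h b \<le> 2 * h \<theta> + 2 * \<delta>" using ha hb by linarith
        then have "(h a + h b) * norm (g \<theta>) \<le> (2 * h \<theta> + 2 * \<delta>) * norm (g \<theta>)"
          by (intro mult_right_mono) auto
        also have "\<dots> \<le> F \<theta>" using Fb th sa bt by auto
        finally show "(h a + h b) * norm (g \<theta>) \<le> F \<theta>" .
      qed
      finally show "\<bar>h b ^ 2 - h a ^ 2\<bar> \<le> integral {a..b} F" .
    qed
    then show ?case using d by blast
  qed
  then show ?thesis unfolding P_def by auto
qed


lemma tw_facts:
  assumes "tangential_weak_deriv v g" "0 < a" "a \<le> b" "b < pi"
  shows "g integrable_on {a..b}" "(\<lambda>\<theta>. norm (g \<theta>)) integrable_on {a..b}"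
    "v (hc b) - v (hc a) = integral {a..b} g"
proof -
  have si: "set_integrable lborel {a..b} g" and eq: "v (hc b) - v (hc a) = (LINT \<theta>:{a..b}|lborel. g \<theta>)"
    using assms unfolding tangential_weak_deriv_def by auto
  show "g integrable_on {a..b}" using set_borel_integral_eq_integral(1)[OF si] .
  show "(\<lambda>\<theta>. norm (g \<theta>)) integrable_on {a..b}"
    using set_borel_integral_eq_integral(1)[OF set_integrable_norm[OF si]] .
  show "v (hc b) - v (hc a) = integral {a..b} g" using eq set_borel_integral_eq_integral(2)[OF si] by simp
qed

lemma w_cont:
  assumes tw: "tangential_weak_deriv v g" and x: "0 < x" "x < pi"
  shows "isCont (\<lambda>\<theta>. v (hc \<theta>)) x"
proof -
  define a b where "a = x/2" and "b = (x+pi)/2"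
  have ab: "0 < a" "a < x" "x < b" "b < pi" using x by (auto simp: a_def b_def)
  have gi: "g integrable_on {a..b}" using tw_facts(1)[OF tw ab(1) _ ab(4)] ab by simp
  have c1: "continuous_on {a..b} (\<lambda>\<theta>. v (hc a) + integral {a..\<theta>} g)"
    by (intro continuous_on_add continuous_on_const indefinite_integral_continuous_1 gi)
  have c2: "v (hc a) + integral {a..\<theta>} g = v (hc \<theta>)" if "\<theta> \<in> {a..b}" for \<theta>
  proof -
    have "v (hc \<theta>) - v (hc a) = integral {a..\<theta>} g"
      using tw_facts(3)[OF tw ab(1), of \<theta>] that ab by simp
    then show ?thesis by (simp flip: \<open>v (hc \<theta>) - v (hc a) = integral {a..\<theta>} g\<close>)
  qed
  have "continuous_on {a..b} (\<lambda>\<theta>. v (hc \<theta>))"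
    by (rule continuous_on_eq[OF c1 c2])
  moreover have "x \<in> interior {a..b}" using ab by simp
  ultimately show ?thesis using continuous_on_interior by blast
qed

lemma hc_in: "0 < \<theta> \<Longrightarrow> \<theta> < pi \<Longrightarrow> hc \<theta> \<in> upper_half_circle"
  using sin_gt_zero[of \<theta>] unfolding hc_def upper_half_circle_def by simp

lemma lim_right:
  assumes "(v \<longlongrightarrow> p) (at (1, 0) within upper_half_circle)"
  shows "((\<lambda>\<theta>. v (hc \<theta>)) \<longlongrightarrow> p) (at_right 0)"
proof -
  have "filterlim hc (at (1, 0) within upper_half_circle) (at_right 0)"
    unfolding filterlim_at
  proof
    have "hc y \<in> upper_half_circle \<and> hc y \<noteq> (1, 0)" if "0 < y" "y < pi" for y
      using hc_in[OF that] sin_gt_zero[OF that] by (auto simp: hc_def)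
    then show "\<forall>\<^sub>F \<theta> in at_right 0. hc \<theta> \<in> upper_half_circle \<and> hc \<theta> \<noteq> (1, 0)"
      unfolding eventually_at_right[OF pi_gt_zero] using pi_gt_zero by blast
    have "(hc \<longlongrightarrow> hc 0) (at_right 0)" unfolding hc_def
      by (intro tendsto_intros continuous_imp_tendsto)
    then show "(hc \<longlongrightarrow> (1, 0)) (at_right 0)" by (simp add: hc_def)
  qed
  then show ?thesis using filterlim_compose assms by blast
qed

lemma lim_left:
  assumes "(v \<longlongrightarrow> p) (at (-1, 0) within upper_half_circle)"
  shows "((\<lambda>\<theta>. v (hc \<theta>)) \<longlongrightarrow> p) (at_left pi)"
proof -
  have "filterlim hc (at (-1, 0) within upper_half_circle) (at_left pi)"
    unfolding filterlim_at
  proof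
    have "hc y \<in> upper_half_circle \<and> hc y \<noteq> (-1, 0)" if "0 < y" "y < pi" for y
      using hc_in[OF that] sin_gt_zero[OF that] by (auto simp: hc_def)
    then show "\<forall>\<^sub>F \<theta> in at_left pi. hc \<theta> \<in> upper_half_circle \<and> hc \<theta> \<noteq> (-1, 0)"
      unfolding eventually_at_left[OF pi_gt_zero] using pi_gt_zero by blast
    have "(hc \<longlongrightarrow> hc pi) (at_left pi)" unfolding hc_def
      by (intro tendsto_intros continuous_imp_tendsto)
    then show "(hc \<longlongrightarrow> (-1, 0)) (at_left pi)" by (simp add: hc_def)
  qed
  then show ?thesis using filterlim_compose assms by blast
qed

lemma amgm0:
  fixes p l h n :: real
  assumes "p > 0" "l > 0"
  shows "2 * h * n \<le> l * (p * n\<^sup>2) + (1/l) * ((1/p) * h\<^sup>2)"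
proof -
  define q where "q = l * p"
  have q: "q > 0" using assms by (simp add: q_def)
  have "0 \<le> (q * n - h)\<^sup>2" by simp
  then have 1: "2 * h * n * q \<le> q\<^sup>2 * n\<^sup>2 + h\<^sup>2" by (simp add: power2_eq_square algebra_simps)
  have 2: "l * (p * n\<^sup>2) + (1/l) * ((1/p) * h\<^sup>2) = (q\<^sup>2 * n\<^sup>2 + h\<^sup>2) / q"
    using assms by (simp add: q_def field_simps power2_eq_square)
  show ?thesis unfolding 2 using 1 q by (simp add: pos_le_divide_eq)
qed

lemma amgm:
  fixes S l h n a :: real
  assumes "S > 0" "l > 0" "h \<ge> 0"
  shows "2 * h * n \<le> l * (S powr a * n\<^sup>2) + (1/l) * (S powr (-a) * h\<^sup>2)"
proof -
  have "S powr (-a) = 1 / S powr a" by (simp add: powr_minus_divide)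
  moreover have "S powr a > 0" using assms by simp
  ultimately show ?thesis using amgm0[of "S powr a" l h n] assms by simp
qed

theorem lemma3p1:
  fixes s a :: real and N :: "'a::euclidean_space set"
    and v :: "real \<times> real \<Rightarrow> 'a" and g :: "real \<Rightarrow> 'a"
  assumes "0 < s" and "s < 1/2" and "a = 1 - 2 * s"
    and "compact N" "smooth_submanifold N"
    and "weighted_H1 a v g"
    and "\<exists>p\<in>N. (v \<longlongrightarrow> p) (at (1, 0) within upper_half_circle)"
    and "\<exists>q\<in>N. (v \<longlongrightarrow> q) (at (-1, 0) within upper_half_circle)"
  shows "\<forall>x\<in>upper_half_circle.
           set_integrable lborel {0<..<pi} (\<lambda>\<theta>. sin \<theta> powr (-a) * (infdist (v (hc \<theta>)) N)\<^sup>2) \<longrightarrow>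
           (infdist (v x) N)\<^sup>2 \<le>
             sqrt (LINT \<theta>:{0<..<pi}|lborel. sin \<theta> powr a * (norm (g \<theta>))\<^sup>2) *
             sqrt (LINT \<theta>:{0<..<pi}|lborel. sin \<theta> powr (-a) * (infdist (v (hc \<theta>)) N)\<^sup>2)"
proof (intro ballI impI)
  fix x assume xU: "x \<in> upper_half_circle"
  assume Hset: "set_integrable lborel {0<..<pi} (\<lambda>\<theta>. sin \<theta> powr (-a) * (infdist (v (hc \<theta>)) N)\<^sup>2)"
  define w where "w \<theta> = v (hc \<theta>)" for \<theta>
  define h where "h \<theta> = infdist (w \<theta>) N" for \<theta>
  define G where "G \<theta> = sin \<theta> powr a * (norm (g \<theta>))\<^sup>2" for \<theta>
  define H where "H \<theta> = sin \<theta> powr (-a) * (h \<theta>)\<^sup>2" for \<theta>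
  have tw: "tangential_weak_deriv v g" and Gset: "set_integrable lborel {0<..<pi} G"
    using assms(6) unfolding weighted_H1_def G_def by auto
  have Hset': "set_integrable lborel {0<..<pi} H" unfolding H_def h_def w_def using Hset .
  define A where "A = (LINT \<theta>:{0<..<pi}|lborel. G \<theta>)"
  define B where "B = (LINT \<theta>:{0<..<pi}|lborel. H \<theta>)"
  have A: "A = integral {0<..<pi} G" using set_borel_integral_eq_integral(2)[OF Gset] A_def by simp
  have B: "B = integral {0<..<pi} H" using set_borel_integral_eq_integral(2)[OF Hset'] B_def by simp
  have GI: "G integrable_on {0<..<pi}" using set_borel_integral_eq_integral(1)[OF Gset] .
  have HI: "H integrable_on {0<..<pi}" using set_borel_integral_eq_integral(1)[OF Hset'] .
  have G0: "\<And>\<theta>. G \<theta> \<ge> 0" by (simp add: G_def)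
  have H0: "\<And>\<theta>. H \<theta> \<ge> 0" by (simp add: H_def)
  have h0: "\<And>\<theta>. h \<theta> \<ge> 0" by (simp add: h_def infdist_nonneg)
  have A0: "A \<ge> 0" unfolding A using G0 by (simp add: integral_nonneg GI)
  have B0: "B \<ge> 0" unfolding B using H0 by (simp add: integral_nonneg HI)
  have Gsub: "G integrable_on {c..d}" if "0 < c" "d < pi" for c d
  proof -
    have sub: "{c..d} \<subseteq> {0<..<pi}" using that by auto
    show ?thesis
      using set_borel_integral_eq_integral(1)[OF set_integrable_subset[OF Gset _ sub]] by simp
  qed
  have Hsub: "H integrable_on {c..d}" if "0 < c" "d < pi" for c d
  proof -
    have sub: "{c..d} \<subseteq> {0<..<pi}" using that by auto
    show ?thesis
      using set_borel_integral_eq_integral(1)[OF set_integrable_subset[OF Hset' _ sub]] by simp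
  qed
  have Gle: "integral {c..d} G \<le> A" if "0 < c" "d < pi" for c d
    unfolding A using that G0 by (intro integral_subset_le Gsub GI) auto
  have Hle: "integral {c..d} H \<le> B" if "0 < c" "d < pi" for c d
    unfolding B using that H0 by (intro integral_subset_le Hsub HI) auto
  have hcont: "isCont h \<theta>" if "0 < \<theta>" "\<theta> < pi" for \<theta>
    unfolding h_def w_def by (intro continuous_intros w_cont[OF tw] that)
  have hlip: "\<And>c d. \<bar>h d - h c\<bar> \<le> norm (w d - w c)"
    unfolding h_def using infdist_triangle_abs dist_norm by metis
  have wd: "norm (w d - w c) \<le> integral {c..d} (\<lambda>\<theta>. norm (g \<theta>))" if "0 < c" "c \<le> d" "d < pi" for c d
    unfolding w_def tw_facts(3)[OF tw that]
    by (rule integral_norm_bound_integral[OF tw_facts(1)[OF tw that] tw_facts(2)[OF tw that]]) simp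
  obtain p where p: "p \<in> N" "(v \<longlongrightarrow> p) (at (1, 0) within upper_half_circle)" using assms(7) by blast
  obtain q where q: "q \<in> N" "(v \<longlongrightarrow> q) (at (-1, 0) within upper_half_circle)" using assms(8) by blast
  have hR: "((\<lambda>\<theta>. (h \<theta>)\<^sup>2) \<longlongrightarrow> 0) (at_right 0)"
  proof -
    have "((\<lambda>\<theta>. (infdist (w \<theta>) N)\<^sup>2) \<longlongrightarrow> (infdist p N)\<^sup>2) (at_right 0)"
      unfolding w_def by (intro tendsto_intros lim_right p(2))
    then show ?thesis using p(1) by (simp add: h_def)
  qed
  have hL: "((\<lambda>\<theta>. (h \<theta>)\<^sup>2) \<longlongrightarrow> 0) (at_left pi)"
  proof -
    have "((\<lambda>\<theta>. (infdist (w \<theta>) N)\<^sup>2) \<longlongrightarrow> (infdist q N)\<^sup>2) (at_left pi)"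
      unfolding w_def by (intro tendsto_intros lim_left q(2))
    then show ?thesis using q(1) by (simp add: h_def)
  qed
  obtain x1 x2 where x12: "x = (x1, x2)" by (cases x)
  have x1: "x1\<^sup>2 + x2\<^sup>2 = 1" "x2 > 0" using xU x12 by (auto simp: upper_half_circle_def)
  have x1b: "-1 < x1" "x1 < 1"
  proof -
    have "x1\<^sup>2 < 1" using x1 by (smt (verit) zero_less_power)
    then have "\<bar>x1\<bar> < 1" using abs_square_less_1 by blast
    then show "-1 < x1" "x1 < 1" by linarith+
  qed
  define t0 where "t0 = arccos x1"
  have t0: "0 < t0" "t0 < pi" using arccos_lt_bounded[OF x1b] t0_def by auto
  have "sin t0 = x2"
  proof -
    have "sin t0 = sqrt (1 - x1\<^sup>2)" using sin_arccos x1b t0_def by auto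
    also have "1 - x1\<^sup>2 = x2\<^sup>2" using x1 by linarith
    finally show ?thesis using x1 by simp
  qed
  then have hct0: "hc t0 = x" using x12 x1b by (simp add: hc_def t0_def)
  define M where "M = h t0"
  have Mx: "infdist (v x) N = M" by (simp add: M_def h_def w_def hct0)
  have C: "2 * M\<^sup>2 \<le> l * A + B / l" if l: "l > 0" for l
  proof (rule field_le_epsilon)
    fix e :: real assume e: "e > 0"
    define \<epsilon> where "\<epsilon> = e / 3"
    have eps: "\<epsilon> > 0" using e by (simp add: \<epsilon>_def)
    have "\<forall>\<^sub>F \<theta> in at_right 0. (h \<theta>)\<^sup>2 < \<epsilon>" using order_tendstoD(2)[OF hR eps] .
    then obtain b1 where b1: "b1 > 0" "\<And>y. y > 0 \<Longrightarrow> y < b1 \<Longrightarrow> (h y)\<^sup>2 < \<epsilon>"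
      unfolding eventually_at_right[OF pi_gt_zero] by blast
    define s where "s = min b1 t0 / 2"
    have s: "0 < s" "s < t0" "(h s)\<^sup>2 < \<epsilon>" using b1 t0 by (auto simp: s_def)
    have "\<forall>\<^sub>F \<theta> in at_left pi. (h \<theta>)\<^sup>2 < \<epsilon>" using order_tendstoD(2)[OF hL eps] .
    then obtain b2 where b2: "b2 < pi" "\<And>y. y > b2 \<Longrightarrow> y < pi \<Longrightarrow> (h y)\<^sup>2 < \<epsilon>"
      unfolding eventually_at_left[OF pi_gt_zero] by blast
    define t where "t = (max b2 t0 + pi) / 2"
    have t: "t0 < t" "t < pi" "(h t)\<^sup>2 < \<epsilon>" using b2 t0 by (auto simp: t_def)
    define I where "I = integral {s..t} (\<lambda>\<theta>. norm (g \<theta>))"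
    have gI: "(\<lambda>\<theta>. norm (g \<theta>)) integrable_on {s..t}" using tw_facts(2)[OF tw, of s t] s t by auto
    have I0: "I \<ge> 0" unfolding I_def by (rule integral_nonneg[OF gI]) auto
    define \<delta> where "\<delta> = \<epsilon> / (2 * (I + 1))"
    have dpos: "\<delta> > 0" using eps I0 by (simp add: \<delta>_def)
    define F where "F \<theta> = l * G \<theta> + (1/l) * H \<theta> + 2 * \<delta> * norm (g \<theta>)" for \<theta>
    have FI: "F integrable_on {c..d}" if "s \<le> c" "d \<le> t" for c d
    proof -
      have i1: "G integrable_on {c..d}" "H integrable_on {c..d}"
        using Gsub Hsub that s t by auto
      have i2: "(\<lambda>\<theta>. norm (g \<theta>)) integrable_on {c..d}"
        using integrable_on_subinterval[OF gI] that by auto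
      show ?thesis unfolding F_def
        by (intro integrable_add cm i1 i2)
    qed
    have Fb: "(2*h \<theta> + 2*\<delta>) * norm (g \<theta>) \<le> F \<theta>" if "\<theta> \<in> {s..t}" for \<theta>
    proof -
      have "sin \<theta> > 0" using that s t by (intro sin_gt_zero) auto
      then have "2 * h \<theta> * norm (g \<theta>) \<le> l * G \<theta> + (1/l) * H \<theta>"
        unfolding G_def H_def using amgm l h0 by blast
      then show ?thesis by (simp add: F_def algebra_simps)
    qed
    have k1: "\<bar>h t0 ^ 2 - h s ^ 2\<bar> \<le> integral {s..t0} F"
      by (rule key_local[where w=w and g=g and \<delta>=\<delta> and F=F and h=h]) (use s t wd hcont hlip h0 dpos Fb FI
          integrable_on_subinterval[OF gI, of s t0] in auto)
    have k2: "\<bar>h t ^ 2 - h t0 ^ 2\<bar> \<le> integral {t0..t} F"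
      by (rule key_local[where w=w and g=g and \<delta>=\<delta> and F=F and h=h]) (use s t wd hcont hlip h0 dpos Fb FI
          integrable_on_subinterval[OF gI, of t0 t] in auto)
    have comb: "integral {s..t0} F + integral {t0..t} F = integral {s..t} F"
      using Henstock_Kurzweil_Integration.integral_combine[of s t0 t F] FI[of s t] s t by auto
    have "integral {s..t} F = l * integral {s..t} G + (1/l) * integral {s..t} H + 2 * \<delta> * I"
    proof -
      have i1: "G integrable_on {s..t}" "H integrable_on {s..t}" using Gsub Hsub s t by auto
      have "integral {s..t} F = integral {s..t} (\<lambda>\<theta>. l * G \<theta> + (1/l) * H \<theta>)
           + integral {s..t} (\<lambda>\<theta>. 2 * \<delta> * norm (g \<theta>))"
        unfolding F_def by (intro integral_add integrable_add cm i1 gI)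
      also have "integral {s..t} (\<lambda>\<theta>. l * G \<theta> + (1/l) * H \<theta>)
           = integral {s..t} (\<lambda>\<theta>. l * G \<theta>) + integral {s..t} (\<lambda>\<theta>. (1/l) * H \<theta>)"
        by (intro integral_add cm i1)
      also have "integral {s..t} (\<lambda>\<theta>. l * G \<theta>) = l * integral {s..t} G"
        using integral_mult[OF i1(1), of l] by simp
      also have "integral {s..t} (\<lambda>\<theta>. (1/l) * H \<theta>) = (1/l) * integral {s..t} H"
        using integral_mult[OF i1(2), of "1/l"] by simp
      also have "integral {s..t} (\<lambda>\<theta>. 2 * \<delta> * norm (g \<theta>)) = 2 * \<delta> * I"
        unfolding I_def using integral_mult[OF gI, of "2 * \<delta>"] by simp
      finally show ?thesis .
    qed
    also have "\<dots> \<le> l * A + (1/l) * B + 2 * \<delta> * I"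
      using Gle[of s t] Hle[of s t] s t l dpos by (intro add_mono mult_left_mono) auto
    also have "2 * \<delta> * I \<le> \<epsilon>"
    proof -
      have "2 * \<delta> * I = \<epsilon> * (I / (I + 1))" using I0 by (simp add: \<delta>_def field_simps)
      also have "\<dots> \<le> \<epsilon> * 1" using I0 eps by (intro mult_left_mono) auto
      finally show ?thesis by simp
    qed
    finally have "integral {s..t} F \<le> l * A + B / l + \<epsilon>" by simp
    then have "2 * (h t0)\<^sup>2 \<le> l * A + B / l + 3 * \<epsilon>"
      using k1 k2 comb s(3) t(3) by linarith
    then show "2 * M\<^sup>2 \<le> l * A + B / l + e" by (simp add: M_def \<epsilon>_def)
  qed
  have "M\<^sup>2 \<le> sqrt A * sqrt B"
  proof (cases "A > 0 \<and> B > 0")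
    case True
    define l where "l = sqrt B / sqrt A"
    have l: "l > 0" using True by (simp add: l_def)
    have "l * A = sqrt A * sqrt B" using True
      by (simp add: l_def field_simps) (metis real_sqrt_pow2 less_eq_real_def power2_eq_square)?
    moreover have "B / l = sqrt A * sqrt B" using True
      by (simp add: l_def field_simps) (metis real_sqrt_pow2 less_eq_real_def power2_eq_square)?
    ultimately show ?thesis using C[OF l] by linarith
  next
    case False
    have "M\<^sup>2 \<le> 0"
    proof (rule ccontr)
      assume m: "\<not> M\<^sup>2 \<le> 0"
      then have m: "M\<^sup>2 > 0" by simp
      show False
      proof (cases "A = 0")
        case True
        define l where "l = (B + 1) / M\<^sup>2"
        have l: "l > 0" using m B0 by (simp add: l_def)
        have "B / l = B * M\<^sup>2 / (B + 1)" using m B0 by (simp add: l_def field_simps)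
        also have "\<dots> \<le> M\<^sup>2" using m B0 by (simp add: pos_divide_le_eq algebra_simps)
        finally show False using C[OF l] True m by simp
      next
        case False
        then have "B = 0" using \<open>\<not> (A > 0 \<and> B > 0)\<close> A0 B0 by auto
        define l where "l = M\<^sup>2 / (A + 1)"
        have l: "l > 0" using m A0 by (simp add: l_def)
        have "l * A = M\<^sup>2 * A / (A + 1)" by (simp add: l_def)
        also have "\<dots> \<le> M\<^sup>2" using m A0 by (simp add: pos_divide_le_eq algebra_simps)
        finally show False using C[OF l] \<open>B = 0\<close> m by simp
      qed
    qed
    then show ?thesis using A0 B0 by simp
  qed
  then show "(infdist (v x) N)\<^sup>2 \<le>
             sqrt (LINT \<theta>:{0<..<pi}|lborel. sin \<theta> powr a * (norm (g \<theta>))\<^sup>2) *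
             sqrt (LINT \<theta>:{0<..<pi}|lborel. sin \<theta> powr (-a) * (infdist (v (hc \<theta>)) N)\<^sup>2)"
    using Mx by (simp add: A_def B_def G_def H_def h_def w_def)
qed

end
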